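(* Let $h>0$, assume $g$ satisfies (H), fix $c>0$, and let $\phi,\psi$ be two wavefront profiles of (1) with velocity $c$. Suppose that, as $t\to-\infty$, $\phi(t)=a(-t)^m e^{\lambda t}(1+o(1))$ and $\psi(t)=b(-t)^n e^{\mu t}(1+o(1))$ with $a,b>0$, $\lambda,\mu>0$ and $m,n\in\{0,1\}$. Then $\lambda=\mu$ and $m=n$.
   Context: Hypothesis (H): $g:\mathbb{R}_+\to\mathbb{R}_+$ is continuous and strictly increasing; $g(x)=x$ has exactly two nonnegative solutions $0$ and $\kappa>0$; $g$ is differentiable at $0,\kappa$ with $g'(0)>1$, $g'(\kappa)<1$; $g$ is $C^1$ near $\kappa$; and $|g(u)/u-g'(0)|\le Cu^\theta$ for $u\in(0,\delta]$ for some $C>0,\theta\in(0,1],\delta>0$. A wavefront profile with velocity $c$ is a $C^2$, positive, bounded, monotone $\phi:\mathbb{R}\to\mathbb{R}$ with $\phi(-\infty)=0$, $\phi(+\infty)=\kappa$ and $\phi''(s)-c\phi'(s)-\phi(s)+g(\phi(s-ch))=0$, $s\in\mathbb{R}$. *)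

theory Defs
  imports "HOL-Analysis.Analysis"
begin

text \<open>Hypothesis (H) on g : R_+ -> R_+ (only the values on [0,inf) matter).
  g0 = g'(0), gk = g'(kappa); derivatives at 0 are one-sided (within [0,inf)).\<close>
definition hypH :: "(real \<Rightarrow> real) \<Rightarrow> real \<Rightarrow> bool" where
  "hypH g \<kappa> \<longleftrightarrow>
     \<kappa> > 0 \<and>
     (\<forall>x\<ge>0. g x \<ge> 0) \<and>
     continuous_on {0..} g \<and>
     strict_mono_on {0..} g \<and>
     {x. x \<ge> 0 \<and> g x = x} = {0, \<kappa>} \<and>
     (\<exists>g0 gk. (g has_real_derivative g0) (at 0 within {0..}) \<and>
              (g has_real_derivative gk) (at \<kappa> within {0..}) \<and>
              g0 > 1 \<and> gk < 1 \<and>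
              (\<exists>C \<theta> \<delta>. C > 0 \<and> 0 < \<theta> \<and> \<theta> \<le> 1 \<and> \<delta> > 0 \<and>
                 (\<forall>u. 0 < u \<and> u \<le> \<delta> \<longrightarrow> \<bar>g u / u - g0\<bar> \<le> C * u powr \<theta>))) \<and>
     (\<exists>r>0. r < \<kappa> \<and> g differentiable_on ball \<kappa> r \<and> continuous_on (ball \<kappa> r) (deriv g))"

definition wavefront :: "(real \<Rightarrow> real) \<Rightarrow> real \<Rightarrow> real \<Rightarrow> real \<Rightarrow> (real \<Rightarrow> real) \<Rightarrow> bool" where
  "wavefront g \<kappa> h c \<phi> \<longleftrightarrow>
     (\<exists>\<phi>' \<phi>''. (\<forall>s. (\<phi> has_real_derivative \<phi>' s) (at s)) \<and>
               (\<forall>s. (\<phi>' has_real_derivative \<phi>'' s) (at s)) \<and>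
               continuous_on UNIV \<phi>'' \<and>
               (\<forall>s. \<phi>'' s - c * \<phi>' s - \<phi> s + g (\<phi> (s - c * h)) = 0)) \<and>
     (\<forall>s. \<phi> s > 0) \<and> bounded (range \<phi>) \<and> (mono \<phi> \<or> antimono \<phi>) \<and>
     (\<phi> \<longlongrightarrow> 0) at_bot \<and> (\<phi> \<longlongrightarrow> \<kappa>) at_top"

end

theory Submission
  imports Defs "HOL-Real_Asymp.Real_Asymp"
begin


definition sol :: "(real \<Rightarrow> real) \<Rightarrow> real \<Rightarrow> real \<Rightarrow> (real \<Rightarrow> real) \<Rightarrow> bool" where
  "sol g c h u \<longleftrightarrow> (\<exists>u' u''. (\<forall>s. (u has_real_derivative u' s) (at s)) \<and>
     (\<forall>s. (u' has_real_derivative u'' s) (at s)) \<and>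
     (\<forall>s. u'' s - c * u' s - u s + g (u (s - c * h)) = 0))"

lemma max2:
  fixes w w' w'' :: "real \<Rightarrow> real"
  assumes D1: "\<And>s. (w has_real_derivative w' s) (at s)"
    and D2: "\<And>s. (w' has_real_derivative w'' s) (at s)"
    and mx: "\<And>t. w t \<le> w t0"
  shows "w' t0 = 0 \<and> w'' t0 \<le> 0"
proof
  show w0: "w' t0 = 0"
    by (rule DERIV_local_max[OF D1, of 1]) (auto simp: mx)
  show "w'' t0 \<le> 0"
  proof (rule ccontr)
    assume "\<not> w'' t0 \<le> 0"
    then have "w'' t0 > 0" by simp
    from DERIV_pos_inc_right[OF D2 this] obtain d where d: "d > 0"
      "\<And>h. h > 0 \<Longrightarrow> h < d \<Longrightarrow> w' t0 < w' (t0 + h)" by blast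
    have "t0 < t0 + d/2" using d by simp
    from MVT2[OF this, of w w'] D1 obtain z where z: "t0 < z" "z < t0 + d/2"
      "w (t0 + d/2) - w t0 = (t0 + d/2 - t0) * w' z" by blast
    have "w' t0 < w' (t0 + (z - t0))" using d z by (intro d(2)) auto
    then have "w' z > 0" using w0 by simp
    then have "(t0 + d/2 - t0) * w' z > 0" using d by simp
    then have "w (t0 + d/2) - w t0 > 0" using z(3) by linarith
    with mx[of "t0 + d/2"] show False by simp
  qed
qed

lemma touch:
  assumes su: "sol g c h u" and sv: "sol g c h v" and sm: "strict_mono_on {0..} g"
    and u0: "\<And>t. 0 \<le> u t" and v0: "\<And>t. 0 \<le> v t" and le: "\<And>t. u t \<le> v t"
    and eq: "u t0 = v t0"
  shows "u (t0 - c*h) = v (t0 - c*h)"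
proof -
  obtain u' u'' where U: "\<And>s. (u has_real_derivative u' s) (at s)"
    "\<And>s. (u' has_real_derivative u'' s) (at s)"
    "\<And>s. u'' s - c * u' s - u s + g (u (s - c * h)) = 0" using su unfolding sol_def by blast
  obtain v' v'' where V: "\<And>s. (v has_real_derivative v' s) (at s)"
    "\<And>s. (v' has_real_derivative v'' s) (at s)"
    "\<And>s. v'' s - c * v' s - v s + g (v (s - c * h)) = 0" using sv unfolding sol_def by blast
  have "(\<lambda>s. u' s - v' s) t0 = 0 \<and> (\<lambda>s. u'' s - v'' s) t0 \<le> 0"
    by (rule max2[where w="\<lambda>s. u s - v s"]) (auto intro!: DERIV_diff U V simp: eq le)
  then have A: "g (u (t0 - c*h)) - g (v (t0 - c*h)) \<ge> 0" using U(3)[of t0] V(3)[of t0] eq by simp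
  show ?thesis
  proof (rule ccontr)
    assume "u (t0 - c*h) \<noteq> v (t0 - c*h)"
    then have "u (t0 - c*h) < v (t0 - c*h)" using le[of "t0 - c*h"] by simp
    then have "g (u (t0 - c*h)) < g (v (t0 - c*h))" using u0 v0 by (intro strict_mono_onD[OF sm]) auto
    with A show False by simp
  qed
qed

lemma touch_iter:
  assumes su: "sol g c h u" and sv: "sol g c h v" and sm: "strict_mono_on {0..} g"
    and u0: "\<And>t. 0 \<le> u t" and v0: "\<And>t. 0 \<le> v t" and le: "\<And>t. u t \<le> v t"
    and eq: "u t0 = v t0"
  shows "u (t0 - real k * (c*h)) = v (t0 - real k * (c*h))"
proof (induction k)
  case 0 then show ?case using eq by simp
next
  case (Suc k)
  have "u (t0 - real k * (c*h) - c*h) = v (t0 - real k * (c*h) - c*h)"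
    by (rule touch[OF su sv sm u0 v0 le Suc])
  then show ?case by (simp add: algebra_simps)
qed

lemma tail:
  fixes u v g :: "real \<Rightarrow> real"
  assumes su: "sol g c h u" and sv: "sol g c h v" and sm: "strict_mono_on {0..} g"
    and L: "L < 1" "0 \<le> L" and lo: "0 \<le> lo"
    and lip: "\<And>x y. lo \<le> y \<Longrightarrow> y \<le> x \<Longrightarrow> x \<le> k \<Longrightarrow> g x - g y \<le> L * (x - y)"
    and zone: "\<And>t. t \<ge> T - c*h \<Longrightarrow> lo \<le> u t \<and> u t \<le> k \<and> lo \<le> v t \<and> v t \<le> k"
    and le: "\<And>t. t \<le> T \<Longrightarrow> u t \<le> v t"
    and lim: "((\<lambda>t. u t - v t) \<longlongrightarrow> 0) at_top"
  shows "u t \<le> v t"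
proof (rule ccontr)
  assume "\<not> u t \<le> v t"
  then have t1: "u t - v t > 0" by simp
  define w where "w = (\<lambda>t. u t - v t)"
  obtain u' u'' where U: "\<And>s. (u has_real_derivative u' s) (at s)"
    "\<And>s. (u' has_real_derivative u'' s) (at s)"
    "\<And>s. u'' s - c * u' s - u s + g (u (s - c * h)) = 0" using su unfolding sol_def by blast
  obtain v' v'' where V: "\<And>s. (v has_real_derivative v' s) (at s)"
    "\<And>s. (v' has_real_derivative v'' s) (at s)"
    "\<And>s. v'' s - c * v' s - v s + g (v (s - c * h)) = 0" using sv unfolding sol_def by blast
  have Dw: "\<And>s. (w has_real_derivative (u' s - v' s)) (at s)"
    unfolding w_def by (auto intro!: DERIV_diff U V)
  have "eventually (\<lambda>s. w s < w t) at_top" using lim t1 unfolding w_def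
    by (intro order_tendstoD(2)) auto
  then obtain T2 where T2: "\<And>s. s \<ge> T2 \<Longrightarrow> w s < w t" by (auto simp: eventually_at_top_linorder)
  have tT: "t > T" using le[of t] t1 by force
  have cw: "continuous_on {T..max T2 t} w"
    using Dw by (intro continuous_at_imp_continuous_on) (auto intro: DERIV_isCont)
  have ne: "{T..max T2 t} \<noteq> {}" using tT by auto
  obtain t0 where t0: "t0 \<in> {T..max T2 t}" "\<And>y. y \<in> {T..max T2 t} \<Longrightarrow> w y \<le> w t0"
    using continuous_attains_sup[OF compact_Icc ne cw] by blast
  have wt0: "w t \<le> w t0" using t0 tT by auto
  have gm: "\<And>y. w y \<le> w t0"
  proof -
    fix y
    show "w y \<le> w t0"
    proof (cases "y < T")
      case True then show ?thesis using le[of y] wt0 t1 unfolding w_def by auto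
    next
      case False
      show ?thesis
      proof (cases "y \<le> max T2 t")
        case True then show ?thesis using t0 False by auto
      next
        case False
        then have "T2 \<le> y" by simp
        then show ?thesis using T2[of y] wt0 by linarith
      qed
    qed
  qed
  have "(\<lambda>s. u' s - v' s) t0 = 0 \<and> (\<lambda>s. u'' s - v'' s) t0 \<le> 0"
    by (rule max2[where w=w]) (auto intro!: DERIV_diff U V Dw simp: gm)
  then have A: "g (u (t0 - c*h)) - g (v (t0 - c*h)) \<ge> w t0"
    using U(3)[of t0] V(3)[of t0] unfolding w_def by simp
  have wpos: "w t0 > 0" using wt0 t1 unfolding w_def by simp
  define s where "s = t0 - c*h"
  have zs: "lo \<le> u s \<and> u s \<le> k \<and> lo \<le> v s \<and> v s \<le> k" using zone[of s] t0 by (auto simp: s_def)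
  show False
  proof (cases "u s \<le> v s")
    case True
    have "g (u s) \<le> g (v s)"
    proof (cases "u s = v s")
      case True then show ?thesis by simp
    next
      case False
      then have "u s < v s" using \<open>u s \<le> v s\<close> by simp
      moreover have "u s \<in> {0..}" "v s \<in> {0..}" using zs lo by auto
      ultimately show ?thesis using strict_mono_onD[OF sm] by force
    qed
    then show False using A wpos by (simp add: s_def)
  next
    case False
    then have "g (u s) - g (v s) \<le> L * (u s - v s)" using zs by (intro lip) auto
    also have "\<dots> \<le> L * w t0" using gm[of s] L unfolding w_def by (intro mult_left_mono) auto
    also have "\<dots> < w t0" using L wpos by simp
    finally show False using A by (simp add: s_def)
  qed
qed



lemma shift_bot: "filterlim (\<lambda>t::real. t + \<tau>) at_bot at_bot"
  unfolding filterlim_at_bot eventually_at_bot_linorder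
proof
  fix Z show "\<exists>N. \<forall>n\<le>N. n + \<tau> \<le> Z" by (intro exI[of _ "Z - \<tau>"]) auto
qed

lemma shift_top: "filterlim (\<lambda>t::real. t + \<tau>) at_top at_top"
  unfolding filterlim_at_top eventually_at_top_linorder
proof
  fix Z show "\<exists>N. \<forall>n\<ge>N. Z \<le> n + \<tau>" by (intro exI[of _ "Z - \<tau>"]) auto
qed

lemma lip:
  assumes "hypH g \<kappa>"
  shows "\<exists>r L. r > 0 \<and> 0 \<le> L \<and> L < 1 \<and> r < \<kappa> \<and>
     (\<forall>x y. \<kappa> - r \<le> y \<longrightarrow> y \<le> x \<longrightarrow> x \<le> \<kappa> \<longrightarrow> g x - g y \<le> L * (x - y))"
proof -
  from assms obtain gk r0 where kp: "\<kappa> > 0" and gk: "(g has_real_derivative gk) (at \<kappa> within {0..})"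
    "gk < 1" and r0: "r0 > 0" "r0 < \<kappa>" "g differentiable_on ball \<kappa> r0"
    "continuous_on (ball \<kappa> r0) (deriv g)"
    unfolding hypH_def by blast
  have "at \<kappa> within {0..} = at \<kappa>" using kp by (intro at_within_interior) (simp add: interior_real_atLeast)
  with gk have gk': "(g has_real_derivative gk) (at \<kappa>)" by simp
  then have dk: "deriv g \<kappa> = gk" by (rule DERIV_imp_deriv)
  have "isCont (deriv g) \<kappa>" using r0 continuous_on_eq_continuous_at[of "ball \<kappa> r0" "deriv g"] by simp
  then obtain d where d: "d > 0" "\<And>y. dist y \<kappa> < d \<Longrightarrow> dist (deriv g y) (deriv g \<kappa>) < (1 - gk)/2"
    unfolding continuous_at_eps_delta using gk(2) by (metis diff_gt_0_iff_gt half_gt_zero)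
  define r where "r = min (d/2) (r0/2)"
  define L where "L = max 0 ((1 + gk)/2)"
  have "g x - g y \<le> L * (x - y)" if xy: "\<kappa> - r \<le> y" "y \<le> x" "x \<le> \<kappa>" for x y
  proof (cases "y = x")
    case True then show ?thesis by simp
  next
    case False
    then have yx: "y < x" using xy by simp
    have D: "(g has_real_derivative deriv g z) (at z)" if "y \<le> z" "z \<le> x" for z
    proof -
      have "z \<in> ball \<kappa> r0" using that xy d r0 unfolding r_def by (auto simp: dist_real_def)
      then have "g differentiable at z" using r0(3) differentiable_on_eq_differentiable_at[of "ball \<kappa> r0" g] by auto
      then show ?thesis by (simp add: DERIV_deriv_iff_real_differentiable)
    qed
    from MVT2[OF yx, of g "deriv g"] D obtain z where z: "y < z" "z < x" "g x - g y = (x - y) * deriv g z"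
      by blast
    have "dist z \<kappa> < d" using z xy d unfolding r_def by (auto simp: dist_real_def)
    then have "\<bar>deriv g z - gk\<bar> < (1 - gk)/2" using d(2)[of z] dk by (simp add: dist_real_def)
    then have "deriv g z < gk + (1 - gk)/2" using abs_ge_self[of "deriv g z - gk"] by linarith
    then have "deriv g z \<le> (1 + gk)/2" by (simp add: field_simps)
    then have "deriv g z \<le> L" unfolding L_def by (simp add: le_max_iff_disj)
    then show ?thesis using z yx by (simp add: mult_left_mono mult.commute)
  qed
  moreover have "r > 0" "r < \<kappa>" using d r0 unfolding r_def by auto
  moreover have "0 \<le> L" "L < 1" using gk unfolding L_def by auto
  ultimately show ?thesis by blast
qed

lemma wf_facts:
  assumes w: "wavefront g \<kappa> h c \<phi>"
  shows "(\<forall>\<tau>. sol g c h (\<lambda>t. \<phi> (t + \<tau>))) \<and> mono \<phi> \<and> (\<forall>t. 0 < \<phi> t \<and> \<phi> t \<le> \<kappa>) \<and>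
    continuous_on UNIV \<phi> \<and> (\<phi> \<longlongrightarrow> 0) at_bot \<and> (\<phi> \<longlongrightarrow> \<kappa>) at_top"
proof -
  obtain p1 p2 where P: "\<And>s. (\<phi> has_real_derivative p1 s) (at s)"
    "\<And>s. (p1 has_real_derivative p2 s) (at s)"
    "\<And>s. p2 s - c * p1 s - \<phi> s + g (\<phi> (s - c * h)) = 0"
    using w unfolding wavefront_def by blast
  have pos: "\<And>t. 0 < \<phi> t" and mm: "mono \<phi> \<or> antimono \<phi>" and l0: "(\<phi> \<longlongrightarrow> 0) at_bot"
    and lk: "(\<phi> \<longlongrightarrow> \<kappa>) at_top" using w unfolding wavefront_def by auto
  have mono: "mono \<phi>"
  proof (rule ccontr)
    assume "\<not> mono \<phi>"
    then have am: "antimono \<phi>" using mm by simp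
    have "\<phi> 0 \<le> 0"
    proof (rule tendsto_lowerbound[OF l0])
      show "\<forall>\<^sub>F i in at_bot. \<phi> 0 \<le> \<phi> i" unfolding eventually_at_bot_linorder
        using am by (intro exI[of _ 0]) (auto simp: antimono_def)
    qed simp
    with pos[of 0] show False by simp
  qed
  have le: "\<phi> t \<le> \<kappa>" for t
  proof -
    have "\<forall>\<^sub>F i in at_top. \<phi> t \<le> \<phi> i" unfolding eventually_at_top_linorder
      using mono by (intro exI[of _ t]) (auto simp: mono_def)
    then show ?thesis using tendsto_lowerbound[OF lk] by simp
  qed
  have cont: "continuous_on UNIV \<phi>"
    using P(1) by (intro continuous_at_imp_continuous_on) (auto intro: DERIV_isCont)
  have sol: "sol g c h (\<lambda>t. \<phi> (t + \<tau>))" for \<tau>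
  proof -
    have d1: "((\<lambda>t. \<phi> (t + \<tau>)) has_real_derivative p1 (s + \<tau>)) (at s)" for s
      using P(1)[of "s + \<tau>"] by (simp add: DERIV_shift)
    have d2: "((\<lambda>s. p1 (s + \<tau>)) has_real_derivative p2 (s + \<tau>)) (at s)" for s
      using P(2)[of "s + \<tau>"] by (simp add: DERIV_shift)
    have e: "p2 (s + \<tau>) - c * p1 (s + \<tau>) - \<phi> (s + \<tau>) + g (\<phi> (s - c * h + \<tau>)) = 0" for s
    proof -
      have eq: "s - c * h + \<tau> = s + \<tau> - c * h" by simp
      show ?thesis using P(3)[of "s + \<tau>"] by (simp only: eq)
    qed
    show ?thesis unfolding sol_def
      by (intro exI[of _ "\<lambda>s. p1 (s + \<tau>)"] exI[of _ "\<lambda>s. p2 (s + \<tau>)"] conjI allI d1 d2 e)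
  qed
  show ?thesis using sol mono pos le cont l0 lk by blast
qed

lemma ratio:
  fixes \<phi> \<psi> :: "real \<Rightarrow> real"
  assumes P: "((\<lambda>t. \<phi> t / (a * (- t) ^ m * exp (lam * t))) \<longlongrightarrow> 1) at_bot"
    and Q: "((\<lambda>t. \<psi> t / (b * (- t) ^ n * exp (mu * t))) \<longlongrightarrow> 1) at_bot"
    and ab: "a > 0" "b > 0" and pos: "\<And>t. \<phi> t > 0"
    and R: "((\<lambda>t. ((-t)^n * exp(mu*t)) / ((-(t+\<tau>))^m * exp(lam*(t+\<tau>)))) \<longlongrightarrow> 0) at_bot"
  shows "((\<lambda>t. \<psi> t / \<phi> (t + \<tau>)) \<longlongrightarrow> 0) at_bot"
proof -
  have P': "((\<lambda>t. \<phi> (t+\<tau>) / (a * (- (t+\<tau>)) ^ m * exp (lam * (t+\<tau>)))) \<longlongrightarrow> 1) at_bot"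
    using filterlim_compose[OF P shift_bot[of \<tau>]] by simp
  have lim: "((\<lambda>t. (\<psi> t / (b * (- t) ^ n * exp (mu * t))) * (b / a) *
      (((-t)^n * exp(mu*t)) / ((-(t+\<tau>))^m * exp(lam*(t+\<tau>)))) /
      (\<phi> (t+\<tau>) / (a * (- (t+\<tau>)) ^ m * exp (lam * (t+\<tau>))))) \<longlongrightarrow> 1 * (b/a) * 0 / 1) at_bot"
    by (intro tendsto_intros Q R P') simp
  have ev: "eventually (\<lambda>t. (\<psi> t / (b * (- t) ^ n * exp (mu * t))) * (b / a) *
      (((-t)^n * exp(mu*t)) / ((-(t+\<tau>))^m * exp(lam*(t+\<tau>)))) /
      (\<phi> (t+\<tau>) / (a * (- (t+\<tau>)) ^ m * exp (lam * (t+\<tau>)))) = \<psi> t / \<phi> (t + \<tau>)) at_bot"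
    unfolding eventually_at_bot_linorder
  proof (intro exI[of _ "- \<bar>\<tau>\<bar> - 1"] allI impI)
    fix t :: real assume t: "t \<le> - \<bar>\<tau>\<bar> - 1"
    have n1: "(- t) ^ n \<noteq> 0" "(-(t+\<tau>))^m \<noteq> 0" using t by auto
    have n2: "\<phi> (t+\<tau>) \<noteq> 0" using pos[of "t+\<tau>"] by simp
    show "(\<psi> t / (b * (- t) ^ n * exp (mu * t))) * (b / a) *
      (((-t)^n * exp(mu*t)) / ((-(t+\<tau>))^m * exp(lam*(t+\<tau>)))) /
      (\<phi> (t+\<tau>) / (a * (- (t+\<tau>)) ^ m * exp (lam * (t+\<tau>)))) = \<psi> t / \<phi> (t + \<tau>)"
      using n1 n2 ab by (simp add: field_simps)
  qed
  show ?thesis using tendsto_cong[OF ev] lim by simp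
qed

lemma rate:
  fixes lam mu tau :: real and m n :: nat
  assumes "lam < mu \<or> (lam = mu \<and> m = 1 \<and> n = 0)" "m \<in> {0,1}" "n \<in> {0,1}"
  shows "((\<lambda>t. ((-t)^n * exp(mu*t)) / ((-(t+tau))^m * exp(lam*(t+tau)))) \<longlongrightarrow> 0) at_bot"
  unfolding filterlim_at_bot_mirror
proof -
  define d where "d = mu - lam"
  have d: "d > 0 \<or> (d = 0 \<and> m = 1 \<and> n = 0)" using assms(1) by (auto simp: d_def)
  have eq: "\<And>x. exp(mu*(-x)) / exp(lam*((-x)+tau)) = exp(-d*x) * exp(-lam*tau)"
    by (simp add: exp_diff[symmetric] exp_add[symmetric] algebra_simps d_def)
  have eq2: "\<And>x. ((-(-x))^n * exp(mu*(-x))) / ((-((-x)+tau))^m * exp(lam*((-x)+tau)))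
     = x^n / (x - tau)^m * (exp(mu*(-x)) / exp(lam*((-x)+tau)))" by simp
  consider "d > 0" "m = 0" "n = 0" | "d > 0" "m = 0" "n = 1" | "d > 0" "m = 1" "n = 0"
    | "d > 0" "m = 1" "n = 1" | "d = 0" "m = 1" "n = 0" using assms d by auto
  then have "((\<lambda>x. x^n / (x - tau)^m * (exp(-d*x) * exp(-lam*tau))) \<longlongrightarrow> 0) at_top"
  proof cases
    case 1 then show ?thesis by simp real_asymp
  next
    case 2 then show ?thesis by simp real_asymp
  next
    case 3 then show ?thesis by simp real_asymp
  next
    case 4 then show ?thesis by simp real_asymp
  next
    case 5 then show ?thesis by simp real_asymp
  qed
  then show "((\<lambda>x. ((-(-x))^n * exp(mu*(-x))) / ((-((-x)+tau))^m * exp(lam*((-x)+tau)))) \<longlongrightarrow> 0) at_top"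
    unfolding eq2 eq .
qed



lemma slide:
  fixes g \<phi> \<psi> :: "real \<Rightarrow> real"
  assumes hH: "hypH g \<kappa>" and hp: "h > 0" and cp: "c > 0"
    and w\<phi>: "wavefront g \<kappa> h c \<phi>" and w\<psi>: "wavefront g \<kappa> h c \<psi>"
    and rat: "\<And>\<tau>. ((\<lambda>t. \<psi> t / \<phi> (t + \<tau>)) \<longlongrightarrow> 0) at_bot"
  shows False
proof -
  have kp: "\<kappa> > 0" and sm: "strict_mono_on {0..} g" using hH unfolding hypH_def by auto
  have "\<kappa> \<in> {x. x \<ge> 0 \<and> g x = x}" using hH unfolding hypH_def by auto
  then have gk: "g \<kappa> = \<kappa>" by simp
  obtain r L where rL: "r > 0" "0 \<le> L" "L < 1" "r < \<kappa>"
    "\<And>x y. \<kappa> - r \<le> y \<Longrightarrow> y \<le> x \<Longrightarrow> x \<le> \<kappa> \<Longrightarrow> g x - g y \<le> L * (x - y)"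
    using lip[OF hH] by blast
  from wf_facts[OF w\<phi>] have \<phi>sol: "\<And>\<tau>. sol g c h (\<lambda>t. \<phi> (t + \<tau>))" and \<phi>mono: "mono \<phi>"
    and \<phi>pos: "\<And>t. 0 < \<phi> t" and \<phi>le: "\<And>t. \<phi> t \<le> \<kappa>" and \<phi>cont: "continuous_on UNIV \<phi>"
    and \<phi>0: "(\<phi> \<longlongrightarrow> 0) at_bot" and \<phi>k: "(\<phi> \<longlongrightarrow> \<kappa>) at_top" by auto
  from wf_facts[OF w\<psi>] have \<psi>sol': "\<And>\<tau>. sol g c h (\<lambda>t. \<psi> (t + \<tau>))" and \<psi>mono: "mono \<psi>"
    and \<psi>pos: "\<And>t. 0 < \<psi> t" and \<psi>le: "\<And>t. \<psi> t \<le> \<kappa>"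
    and \<psi>0: "(\<psi> \<longlongrightarrow> 0) at_bot" and \<psi>k: "(\<psi> \<longlongrightarrow> \<kappa>) at_top" by auto
  have \<psi>sol: "sol g c h \<psi>" using \<psi>sol'[of 0] by simp
  have ksol: "sol g c h (\<lambda>_. \<kappa>)" unfolding sol_def
    by (intro exI[of _ "\<lambda>_. 0"] conjI allI) (auto simp: gk)
  have below: "\<exists>B. \<forall>t\<le>B. \<psi> t < \<phi> (t + \<tau>)" for \<tau>
  proof -
    have "eventually (\<lambda>t. \<psi> t / \<phi> (t + \<tau>) < 1) at_bot"
      using rat[of \<tau>] by (rule order_tendstoD) simp
    then obtain B where B: "\<And>t. t \<le> B \<Longrightarrow> \<psi> t / \<phi> (t + \<tau>) < 1"
      by (auto simp: eventually_at_bot_linorder)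
    show ?thesis
    proof (intro exI allI impI)
      fix t assume "t \<le> B"
      then show "\<psi> t < \<phi> (t + \<tau>)" using B[of t] \<phi>pos[of "t + \<tau>"] by (simp add: divide_less_eq)
    qed
  qed
  have notouch: False if sv: "sol g c h v" and v0: "\<And>t. 0 \<le> v t" and le: "\<And>t. \<psi> t \<le> v t"
    and eq: "\<psi> t0 = v t0" and B: "\<And>t. t \<le> B \<Longrightarrow> \<psi> t < v t" for v t0 B
  proof -
    have chp: "c * h > 0" using cp hp by simp
    obtain k :: nat where k: "(t0 - B) / (c * h) < real k" using reals_Archimedean2 by blast
    then have "t0 - B < real k * (c * h)" using chp by (simp add: divide_less_eq)
    then have "t0 - real k * (c * h) \<le> B" by simp
    from B[OF this] touch_iter[OF \<psi>sol sv sm _ v0 le eq, of k] \<psi>pos show False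
      by (simp add: less_imp_le)
  qed
  have \<psi>lt: "\<psi> t < \<kappa>" for t
  proof (rule ccontr)
    assume "\<not> \<psi> t < \<kappa>"
    then have eq: "\<psi> t = \<kappa>" using \<psi>le[of t] by simp
    have "eventually (\<lambda>s. \<psi> s < \<kappa>) at_bot" using \<psi>0 kp by (rule order_tendstoD)
    then obtain B where B: "\<And>s. s \<le> B \<Longrightarrow> \<psi> s < \<kappa>" by (auto simp: eventually_at_bot_linorder)
    show False by (rule notouch[OF ksol _ \<psi>le eq, of B]) (use kp B in auto)
  qed
  have ev\<psi>: "\<exists>T. \<forall>t\<ge>T. \<kappa> - r \<le> \<psi> t"
  proof -
    have "eventually (\<lambda>s. \<kappa> - r < \<psi> s) at_top" using \<psi>k rL by (intro order_tendstoD) auto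
    then show ?thesis by (auto simp: eventually_at_top_linorder intro: less_imp_le)
  qed
  have ev\<phi>: "\<exists>T. \<forall>t\<ge>T. \<kappa> - r \<le> \<phi> t"
  proof -
    have "eventually (\<lambda>s. \<kappa> - r < \<phi> s) at_top" using \<phi>k rL by (intro order_tendstoD) auto
    then show ?thesis by (auto simp: eventually_at_top_linorder intro: less_imp_le)
  qed
  define S where "S = {\<tau>. \<forall>t. \<psi> t \<le> \<phi> (t + \<tau>)}"
  have tail': "\<tau> \<in> S" if z1: "\<And>t. t \<ge> T - c*h \<Longrightarrow> \<kappa> - r \<le> \<psi> t"
    and z2: "\<And>t. t \<ge> T - c*h \<Longrightarrow> \<kappa> - r \<le> \<phi> (t + \<tau>)"
    and le: "\<And>t. t \<le> T \<Longrightarrow> \<psi> t \<le> \<phi> (t + \<tau>)" for \<tau> T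
  proof -
    have lim: "((\<lambda>t. \<psi> t - \<phi> (t + \<tau>)) \<longlongrightarrow> 0) at_top"
    proof -
      have "((\<lambda>t. \<psi> t - \<phi> (t + \<tau>)) \<longlongrightarrow> \<kappa> - \<kappa>) at_top"
        by (intro tendsto_diff \<psi>k filterlim_compose[OF \<phi>k shift_top])
      then show ?thesis by simp
    qed
    have "\<psi> t \<le> \<phi> (t + \<tau>)" for t
      by (rule tail[OF \<psi>sol \<phi>sol sm rL(3) rL(2), of "\<kappa> - r" \<kappa> T])
        (use rL z1 z2 le \<psi>le \<phi>le lim in auto)
    then show ?thesis unfolding S_def by auto
  qed
  obtain T where T: "\<And>t. t \<ge> T - c*h \<Longrightarrow> \<kappa> - r \<le> \<psi> t \<and> \<kappa> - r \<le> \<phi> t"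
  proof -
    obtain T1 T2 where "\<forall>t\<ge>T1. \<kappa> - r \<le> \<psi> t" "\<forall>t\<ge>T2. \<kappa> - r \<le> \<phi> t" using ev\<psi> ev\<phi> by blast
    then show ?thesis by (intro that[of "max T1 T2 + c*h"]) auto
  qed
  obtain B0 where B0: "\<And>t. t \<le> B0 \<Longrightarrow> \<psi> t < \<phi> t" using below[of 0] by auto
  define B1 where "B1 = min B0 T"
  have "eventually (\<lambda>s. \<psi> T < \<phi> s) at_top" using \<phi>k \<psi>lt[of T] by (rule order_tendstoD)
  then obtain T0 where T0: "\<And>s. s \<ge> T0 \<Longrightarrow> \<psi> T < \<phi> s" by (auto simp: eventually_at_top_linorder)
  define \<tau>0 where "\<tau>0 = max 0 (T0 - B1)"
  have \<tau>0S: "\<tau>0 \<in> S"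
  proof (rule tail'[of T])
    fix t assume t: "t \<ge> T - c*h"
    show "\<kappa> - r \<le> \<psi> t" using T[OF t] by simp
    have "\<phi> t \<le> \<phi> (t + \<tau>0)" using \<phi>mono unfolding \<tau>0_def by (intro monoD[OF \<phi>mono]) auto
    then show "\<kappa> - r \<le> \<phi> (t + \<tau>0)" using T[OF t] by simp
  next
    fix t assume t: "t \<le> T"
    show "\<psi> t \<le> \<phi> (t + \<tau>0)"
    proof (cases "t \<le> B1")
      case True
      then have "\<psi> t < \<phi> t" using B0 unfolding B1_def by auto
      also have "\<phi> t \<le> \<phi> (t + \<tau>0)" by (intro monoD[OF \<phi>mono]) (auto simp: \<tau>0_def)
      finally show ?thesis by simp
    next
      case False
      have "\<psi> t \<le> \<psi> T" using t by (intro monoD[OF \<psi>mono])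
      also have "\<psi> T < \<phi> (B1 + \<tau>0)" by (intro T0) (auto simp: \<tau>0_def)
      also have "\<phi> (B1 + \<tau>0) \<le> \<phi> (t + \<tau>0)" using False by (intro monoD[OF \<phi>mono]) auto
      finally show ?thesis by simp
    qed
  qed
  have "eventually (\<lambda>s. \<phi> s < \<psi> 0) at_bot" using \<phi>0 \<psi>pos[of 0] by (rule order_tendstoD)
  then obtain Bl where Bl: "\<And>s. s \<le> Bl \<Longrightarrow> \<phi> s < \<psi> 0" by (auto simp: eventually_at_bot_linorder)
  have bdd: "bdd_below S"
  proof (rule bdd_belowI[of _ Bl])
    fix \<tau> assume "\<tau> \<in> S"
    then have "\<psi> 0 \<le> \<phi> (0 + \<tau>)" unfolding S_def by blast
    then have "\<psi> 0 \<le> \<phi> \<tau>" by simp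
    then show "Bl \<le> \<tau>" using Bl[of \<tau>] by force
  qed
  have cl: "closed S"
  proof -
    have "S = (\<Inter>t. {\<tau>. \<psi> t \<le> \<phi> (t + \<tau>)})" unfolding S_def by auto
    moreover have "closed {\<tau>. \<psi> t \<le> \<phi> (t + \<tau>)}" for t
    proof (rule closed_Collect_le)
      show "continuous_on UNIV (\<lambda>\<tau>. \<psi> t)" by (rule continuous_on_const)
      show "continuous_on UNIV (\<lambda>\<tau>. \<phi> (t + \<tau>))"
        by (rule continuous_on_compose2[OF \<phi>cont]) (auto intro!: continuous_intros)
    qed
    ultimately show ?thesis by auto
  qed
  define \<tau>s where "\<tau>s = Inf S"
  have \<tau>sS: "\<tau>s \<in> S" unfolding \<tau>s_def using \<tau>0S bdd cl by (intro closed_contains_Inf) auto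
  have strict: "\<psi> t < \<phi> (t + \<tau>s)" for t
  proof (rule ccontr)
    assume "\<not> \<psi> t < \<phi> (t + \<tau>s)"
    moreover have "\<psi> t \<le> \<phi> (t + \<tau>s)" using \<tau>sS unfolding S_def by blast
    ultimately have eq: "\<psi> t = \<phi> (t + \<tau>s)" by simp
    obtain B where "\<forall>s\<le>B. \<psi> s < \<phi> (s + \<tau>s)" using below by blast
    then show False using notouch[OF \<phi>sol _ _ eq, of B] \<tau>sS \<phi>pos unfolding S_def
      by (auto simp: less_imp_le)
  qed
  obtain Tz where Tz1: "\<And>t. t \<ge> Tz - c*h \<Longrightarrow> \<kappa> - r \<le> \<psi> t"
    and Tz2: "\<And>t. t \<ge> Tz - c*h \<Longrightarrow> \<kappa> - r \<le> \<phi> (t + (\<tau>s - 1))"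
  proof -
    obtain T1 T2 where "\<forall>t\<ge>T1. \<kappa> - r \<le> \<psi> t" "\<forall>t\<ge>T2. \<kappa> - r \<le> \<phi> t" using ev\<psi> ev\<phi> by blast
    then show ?thesis by (intro that[of "max T1 (T2 - \<tau>s + 1) + c*h"]) auto
  qed
  obtain B2 where B2: "\<And>t. t \<le> B2 \<Longrightarrow> \<psi> t < \<phi> (t + (\<tau>s - 1))" using below by blast
  define B3 where "B3 = min B2 Tz"
  have ne: "{B3..Tz} \<noteq> {}" unfolding B3_def by auto
  have cf: "continuous_on {B3..Tz} (\<lambda>t. \<phi> (t + \<tau>s) - \<psi> t)"
  proof -
    have "continuous_on UNIV (\<lambda>t. \<phi> (t + \<tau>s))"
      by (rule continuous_on_compose2[OF \<phi>cont]) (auto intro!: continuous_intros)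
    moreover have "continuous_on UNIV \<psi>" using wf_facts[OF w\<psi>] by auto
    ultimately show ?thesis by (auto intro!: continuous_intros intro: continuous_on_subset)
  qed
  obtain tm where tm: "tm \<in> {B3..Tz}" "\<And>y. y \<in> {B3..Tz} \<Longrightarrow> \<phi> (tm + \<tau>s) - \<psi> tm \<le> \<phi> (y + \<tau>s) - \<psi> y"
    using continuous_attains_inf[OF compact_Icc ne cf] by blast
  define \<delta> where "\<delta> = \<phi> (tm + \<tau>s) - \<psi> tm"
  have \<delta>: "\<delta> > 0" using strict[of tm] unfolding \<delta>_def by simp
  have "uniformly_continuous_on {B3 + \<tau>s - 1 .. Tz + \<tau>s} \<phi>"
    by (rule compact_uniformly_continuous[OF continuous_on_subset[OF \<phi>cont]]) auto
  then obtain \<eta> where \<eta>: "\<eta> > 0" "\<And>x x'. x \<in> {B3 + \<tau>s - 1 .. Tz + \<tau>s} \<Longrightarrow>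
      x' \<in> {B3 + \<tau>s - 1 .. Tz + \<tau>s} \<Longrightarrow> dist x' x < \<eta> \<Longrightarrow> dist (\<phi> x') (\<phi> x) < \<delta>"
    unfolding uniformly_continuous_on_def using \<delta> by metis
  define \<epsilon> where "\<epsilon> = min 1 (\<eta>/2)"
  have \<epsilon>: "0 < \<epsilon>" "\<epsilon> \<le> 1" "\<epsilon> < \<eta>" using \<eta> unfolding \<epsilon>_def by auto
  have "\<tau>s - \<epsilon> \<in> S"
  proof (rule tail'[of Tz])
    fix t assume t: "t \<ge> Tz - c*h"
    show "\<kappa> - r \<le> \<psi> t" using Tz1[OF t] .
    have "\<phi> (t + (\<tau>s - 1)) \<le> \<phi> (t + (\<tau>s - \<epsilon>))" using \<epsilon> by (intro monoD[OF \<phi>mono]) auto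
    then show "\<kappa> - r \<le> \<phi> (t + (\<tau>s - \<epsilon>))" using Tz2[OF t] by simp
  next
    fix t assume t: "t \<le> Tz"
    show "\<psi> t \<le> \<phi> (t + (\<tau>s - \<epsilon>))"
    proof (cases "t \<le> B3")
      case True
      then have "\<psi> t < \<phi> (t + (\<tau>s - 1))" using B2 unfolding B3_def by auto
      also have "\<phi> (t + (\<tau>s - 1)) \<le> \<phi> (t + (\<tau>s - \<epsilon>))" using \<epsilon> by (intro monoD[OF \<phi>mono]) auto
      finally show ?thesis by simp
    next
      case False
      then have tK: "t \<in> {B3..Tz}" using t by auto
      have "dist (\<phi> (t + (\<tau>s - \<epsilon>))) (\<phi> (t + \<tau>s)) < \<delta>"
        using tK \<epsilon> by (intro \<eta>(2)) (auto simp: dist_real_def)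
      then have "\<phi> (t + \<tau>s) - \<phi> (t + (\<tau>s - \<epsilon>)) < \<delta>" by (simp add: dist_real_def abs_less_iff)
      moreover have "\<delta> \<le> \<phi> (t + \<tau>s) - \<psi> t" using tm(2)[OF tK] unfolding \<delta>_def .
      ultimately show ?thesis by simp
    qed
  qed
  then have "\<tau>s \<le> \<tau>s - \<epsilon>" unfolding \<tau>s_def using bdd by (rule cInf_lower)
  then show False using \<epsilon> by simp
qed


theorem mainTheorem5:
  fixes g \<phi> \<psi> :: "real \<Rightarrow> real" and \<kappa> h c a b lam mu :: real and m n :: nat
  assumes "h > 0" and "hypH g \<kappa>" and "c > 0"
    and "wavefront g \<kappa> h c \<phi>" and "wavefront g \<kappa> h c \<psi>"
    and "a > 0" and "b > 0" and "lam > 0" and "mu > 0"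
    and "m \<in> {0, 1}" and "n \<in> {0, 1}"
    and "((\<lambda>t. \<phi> t / (a * (- t) ^ m * exp (lam * t))) \<longlongrightarrow> 1) at_bot"
    and "((\<lambda>t. \<psi> t / (b * (- t) ^ n * exp (mu * t))) \<longlongrightarrow> 1) at_bot"
  shows "lam = mu \<and> m = n"
proof (rule ccontr)
  assume ne: "\<not> (lam = mu \<and> m = n)"
  have \<phi>pos: "\<And>t. 0 < \<phi> t" using assms(4) unfolding wavefront_def by auto
  have \<psi>pos: "\<And>t. 0 < \<psi> t" using assms(5) unfolding wavefront_def by auto
  consider "lam < mu \<or> (lam = mu \<and> m = 1 \<and> n = 0)" | "mu < lam \<or> (mu = lam \<and> n = 1 \<and> m = 0)"
    using ne assms(10,11) by force
  then show False
  proof cases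
    case 1
    show False
      by (rule slide[OF assms(2,1,3,4,5)],
          rule ratio[OF assms(12,13,6,7) \<phi>pos rate[OF 1 assms(10,11)]])
  next
    case 2
    show False
      by (rule slide[OF assms(2,1,3,5,4)],
          rule ratio[OF assms(13,12,7,6) \<psi>pos rate[OF 2 assms(11,10)]])
  qed
qed

end
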